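(* Let $T$ be a balanced tree with a proper 2-coloring $\chi:V\to\{\mathcal{R},\mathcal{B}\}$ in which all leaves are blue. If there is a support vertex $s\in V_1$ with $|N(s)\cap V_2|\ge 2$, then $T$ has two minimal RD-sets of different sizes, and hence $T$ is mixed.
   Context: $N(v)=\{u:uv\in E\}$, $N(D)=\bigcup_{v\in D}N(v)$. A leaf is a vertex of degree 1; a support vertex is a vertex adjacent to a leaf. The height of a vertex is its minimum distance to a leaf; $V_k$ is the set of vertices of height $k$; $T$ is balanced if no two adjacent vertices have the same height. An RD-set is $D\subseteq V$ with $N(D)=\chi^{-1}(\mathcal{R})$, minimal if no proper subset is an RD-set. A TD-set is $D$ with $N(D)=V$, minimal if no proper subset is a TD-set; $T$ is mixed if not all minimal TD-sets have the same size. *)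

theory Defs
  imports Main
begin

datatype color = Red | Blue

definition graph :: "'a set \<Rightarrow> 'a set set \<Rightarrow> bool" where
  "graph V E \<longleftrightarrow> finite V \<and> (\<forall>e\<in>E. e \<subseteq> V \<and> card e = 2)"

definition adj :: "'a set set \<Rightarrow> 'a \<Rightarrow> 'a \<Rightarrow> bool" where
  "adj E u v \<longleftrightarrow> {u, v} \<in> E"

definition nbhd :: "'a set set \<Rightarrow> 'a \<Rightarrow> 'a set" where
  "nbhd E v = {u. adj E u v}"

definition nbhd_set :: "'a set set \<Rightarrow> 'a set \<Rightarrow> 'a set" where
  "nbhd_set E D = (\<Union>v\<in>D. nbhd E v)"

definition connected :: "'a set \<Rightarrow> 'a set set \<Rightarrow> bool" where
  "connected V E \<longleftrightarrow> (\<forall>u\<in>V. \<forall>v\<in>V. (adj E)\<^sup>*\<^sup>* u v)"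

definition has_cycle :: "'a set \<Rightarrow> 'a set set \<Rightarrow> bool" where
  "has_cycle V E \<longleftrightarrow> (\<exists>xs. length xs \<ge> 3 \<and> distinct xs \<and> set xs \<subseteq> V \<and>
      (\<forall>i. Suc i < length xs \<longrightarrow> adj E (xs ! i) (xs ! Suc i)) \<and> adj E (last xs) (hd xs))"

definition tree :: "'a set \<Rightarrow> 'a set set \<Rightarrow> bool" where
  "tree V E \<longleftrightarrow> graph V E \<and> V \<noteq> {} \<and> connected V E \<and> \<not> has_cycle V E"

definition leaf :: "'a set \<Rightarrow> 'a set set \<Rightarrow> 'a \<Rightarrow> bool" where
  "leaf V E v \<longleftrightarrow> v \<in> V \<and> card (nbhd E v) = 1"

definition support_vertex :: "'a set \<Rightarrow> 'a set set \<Rightarrow> 'a \<Rightarrow> bool" where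
  "support_vertex V E v \<longleftrightarrow> v \<in> V \<and> (\<exists>l. leaf V E l \<and> adj E v l)"

text \<open>Height: minimum distance (number of edges on a walk, hence of a shortest path)
  to a leaf.\<close>
definition height :: "'a set \<Rightarrow> 'a set set \<Rightarrow> 'a \<Rightarrow> nat" where
  "height V E v = (LEAST k. \<exists>l. leaf V E l \<and> (adj E ^^ k) v l)"

definition level :: "'a set \<Rightarrow> 'a set set \<Rightarrow> nat \<Rightarrow> 'a set" where
  "level V E k = {v \<in> V. height V E v = k}"

definition balanced :: "'a set \<Rightarrow> 'a set set \<Rightarrow> bool" where
  "balanced V E \<longleftrightarrow> (\<forall>u\<in>V. \<forall>v\<in>V. adj E u v \<longrightarrow> height V E u \<noteq> height V E v)"

definition proper_2_coloring :: "'a set \<Rightarrow> 'a set set \<Rightarrow> ('a \<Rightarrow> color) \<Rightarrow> bool" where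
  "proper_2_coloring V E \<chi> \<longleftrightarrow> (\<forall>u\<in>V. \<forall>v\<in>V. adj E u v \<longrightarrow> \<chi> u \<noteq> \<chi> v)"

definition RD_set :: "'a set \<Rightarrow> 'a set set \<Rightarrow> ('a \<Rightarrow> color) \<Rightarrow> 'a set \<Rightarrow> bool" where
  "RD_set V E \<chi> D \<longleftrightarrow> D \<subseteq> V \<and> nbhd_set E D = {v \<in> V. \<chi> v = Red}"

definition minimal_RD_set :: "'a set \<Rightarrow> 'a set set \<Rightarrow> ('a \<Rightarrow> color) \<Rightarrow> 'a set \<Rightarrow> bool" where
  "minimal_RD_set V E \<chi> D \<longleftrightarrow> RD_set V E \<chi> D \<and> (\<forall>D'. D' \<subset> D \<longrightarrow> \<not> RD_set V E \<chi> D')"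

definition TD_set :: "'a set \<Rightarrow> 'a set set \<Rightarrow> 'a set \<Rightarrow> bool" where
  "TD_set V E D \<longleftrightarrow> D \<subseteq> V \<and> nbhd_set E D = V"

definition minimal_TD_set :: "'a set \<Rightarrow> 'a set set \<Rightarrow> 'a set \<Rightarrow> bool" where
  "minimal_TD_set V E D \<longleftrightarrow> TD_set V E D \<and> (\<forall>D'. D' \<subset> D \<longrightarrow> \<not> TD_set V E D')"

definition mixed :: "'a set \<Rightarrow> 'a set set \<Rightarrow> bool" where
  "mixed V E \<longleftrightarrow> (\<exists>D1 D2. minimal_TD_set V E D1 \<and> minimal_TD_set V E D2 \<and> card D1 \<noteq> card D2)"

end

theory Submission
  imports Defs
begin

lemma successively_nth:
  "successively P xs \<Longrightarrow> Suc i < length xs \<Longrightarrow> P (xs!i) (xs!Suc i)"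
proof (induction P xs arbitrary: i rule: successively.induct)
  case (3 P x y xs)
  then show ?case by (cases i) auto
qed auto

lemma rtranclp_distinct_path:
  assumes "R\<^sup>*\<^sup>* a b" "P a" "\<And>x y. R x y \<Longrightarrow> P y"
  shows "\<exists>xs. xs \<noteq> [] \<and> hd xs = a \<and> last xs = b \<and> distinct xs \<and> successively R xs \<and> (\<forall>y\<in>set xs. P y)"
  using assms(1)
proof (induction rule: rtranclp_induct)
  case base
  then show ?case using assms(2) by (intro exI[of _ "[a]"]) auto
next
  case (step y z)
  then obtain xs where xs: "xs \<noteq> []" "hd xs = a" "last xs = y" "distinct xs" "successively R xs" "\<forall>y\<in>set xs. P y"
    by blast
  show ?case
  proof (cases "z \<in> set xs")
    case True
    then obtain ys zs where yz: "xs = ys @ z # zs" by (meson split_list)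
    have "hd (ys @ [z]) = a" using xs(2) yz by (cases ys) auto
    moreover have "successively R (ys @ [z])" using xs(5) yz
      by (metis append.assoc append_Cons append_Nil successively_append_iff)
    ultimately show ?thesis using xs yz by (intro exI[of _ "ys @ [z]"]) auto
  next
    case False
    have "successively R (xs @ [z])" using xs step(2)
      by (simp add: successively_append_iff)
    then show ?thesis using xs False step(2) assms(3) by (intro exI[of _ "xs @ [z]"]) auto
  qed
qed

lemma adj_sym: "adj E u v = adj E v u"
  unfolding adj_def by (simp add: insert_commute)

lemma adj_V: "graph V E \<Longrightarrow> adj E u v \<Longrightarrow> u \<in> V \<and> v \<in> V"
  unfolding graph_def adj_def by blast

lemma adj_irrefl: "graph V E \<Longrightarrow> \<not> adj E u u"
  unfolding graph_def adj_def by fastforce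

lemma no_two_paths:
  assumes tree: "tree V E" and ca: "adj E c a" and cb: "adj E c b" and ab: "a \<noteq> b"
  shows "\<not> (\<lambda>x y. adj E x y \<and> x \<noteq> c \<and> y \<noteq> c)\<^sup>*\<^sup>* a b"
proof
  assume r: "(\<lambda>x y. adj E x y \<and> x \<noteq> c \<and> y \<noteq> c)\<^sup>*\<^sup>* a b"
  have g: "graph V E" using tree unfolding tree_def by blast
  have aV: "a \<in> V \<and> a \<noteq> c" using ca adj_V[OF g] adj_irrefl[OF g] by metis
  obtain xs where xs: "xs \<noteq> []" "hd xs = a" "last xs = b" "distinct xs"
      "successively (\<lambda>x y. adj E x y \<and> x \<noteq> c \<and> y \<noteq> c) xs" "\<forall>y\<in>set xs. y \<in> V \<and> y \<noteq> c"
    using rtranclp_distinct_path[of _ a b "\<lambda>y. y \<in> V \<and> y \<noteq> c", OF r] aV adj_V[OF g] by blast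
  have l2: "length xs \<ge> 2"
  proof (rule ccontr)
    assume "\<not> ?thesis"
    then have "length xs = 1" using xs(1) by (cases xs) (auto simp: Suc_le_eq)
    then obtain z where "xs = [z]" by (cases xs) auto
    then show False using xs ab by auto
  qed
  have s1: "successively (adj E) xs" using xs(5) by (rule successively_mono) auto
  have s2: "successively (adj E) (c # xs)" using s1 ca xs(1,2) by (simp add: successively_Cons)
  have "has_cycle V E"
    unfolding has_cycle_def
  proof (intro exI[of _ "c # xs"] conjI allI impI)
    show "3 \<le> length (c # xs)" using l2 by simp
    show "distinct (c # xs)" using xs(4,6) by auto
    show "set (c # xs) \<subseteq> V" using xs(6) ca adj_V[OF g] by auto
    fix i assume "Suc i < length (c # xs)"
    then show "adj E ((c # xs) ! i) ((c # xs) ! Suc i)" using successively_nth[OF s2] by blast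
  next
    show "adj E (last (c # xs)) (hd (c # xs))" using xs(1,3) cb adj_sym by (simp add: adj_sym)
  qed
  then show False using tree unfolding tree_def by blast
qed


definition bp :: "('a \<Rightarrow> 'b set) \<Rightarrow> 'a set \<Rightarrow> 'b set \<Rightarrow> bool" where
  "bp f X Z \<longleftrightarrow> (\<forall>x\<in>X. \<exists>r\<in>Z. r \<in> f x \<and> r \<notin> \<Union>(f ` (X - {x})))"

lemma min_cover:
  fixes f :: "'a \<Rightarrow> 'b set"
  assumes "finite B" "Z \<subseteq> \<Union>(f ` B)"
  shows "\<exists>X \<subseteq> B. Z \<subseteq> \<Union>(f ` X) \<and> bp f X Z"
proof -
  let ?P = "\<lambda>X. X \<subseteq> B \<and> Z \<subseteq> \<Union>(f ` X)"
  obtain X where X: "?P X" and m: "\<And>Y. ?P Y \<Longrightarrow> card X \<le> card Y"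
    using ex_has_least_nat[of ?P B card] assms by blast
  have "bp f X Z"
    unfolding bp_def
  proof
    fix x assume x: "x \<in> X"
    show "\<exists>r\<in>Z. r \<in> f x \<and> r \<notin> \<Union>(f ` (X - {x}))"
    proof (rule ccontr)
      assume "\<not> ?thesis"
      then have "?P (X - {x})" using X by blast
      then have "card X \<le> card (X - {x})" by (rule m)
      moreover have "finite X" using X assms(1) finite_subset by blast
      ultimately show False using x card_Diff1_less[of X x] by linarith
    qed
  qed
  then show ?thesis using X by blast
qed

lemma bp_union:
  assumes "bp f X Z" "bp f Y W" "\<Union>(f ` Y) \<inter> Z = {}" "\<Union>(f ` X) \<inter> W = {}"
  shows "bp f (X \<union> Y) (Z \<union> W)"
  unfolding bp_def
proof
  fix x assume x: "x \<in> X \<union> Y"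
  show "\<exists>r\<in>Z \<union> W. r \<in> f x \<and> r \<notin> \<Union>(f ` (X \<union> Y - {x}))"
  proof (cases "x \<in> X")
    case True
    then obtain r where r: "r \<in> Z" "r \<in> f x" "r \<notin> \<Union>(f ` (X - {x}))" using assms(1) unfolding bp_def by blast
    have "r \<notin> \<Union>(f ` Y)" using assms(3) r by blast
    then show ?thesis using r by blast
  next
    case False
    then have xY: "x \<in> Y" using x by blast
    then obtain r where r: "r \<in> W" "r \<in> f x" "r \<notin> \<Union>(f ` (Y - {x}))" using assms(2) unfolding bp_def by blast
    have "r \<notin> \<Union>(f ` X)" using assms(4) r by blast
    then show ?thesis using r False by blast
  qed
qed

lemma bp_single: "r \<in> f x \<Longrightarrow> bp f {x} {r}"
  unfolding bp_def by auto

lemma nbhd_set_alt: "nbhd_set E D = \<Union>(nbhd E ` D)"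
  unfolding nbhd_set_def by simp

lemma minimal_RD_from_bp:
  assumes "D \<subseteq> V" "nbhd_set E D = {v \<in> V. \<chi> v = Red}" "bp (nbhd E) D Z"
  shows "minimal_RD_set V E \<chi> D"
  unfolding minimal_RD_set_def
proof (intro conjI allI impI)
  show "RD_set V E \<chi> D" using assms unfolding RD_set_def by blast
  fix D' assume D': "D' \<subset> D"
  then obtain x where x: "x \<in> D" "x \<notin> D'" by blast
  then obtain r where r: "r \<in> nbhd E x" "r \<notin> \<Union>(nbhd E ` (D - {x}))" using assms(3) unfolding bp_def by blast
  have "r \<notin> nbhd_set E D'" using r D' x unfolding nbhd_set_alt by blast
  moreover have "r \<in> nbhd_set E D" using r x unfolding nbhd_set_alt by blast
  ultimately show "\<not> RD_set V E \<chi> D'" using assms(2) unfolding RD_set_def by blast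
qed

lemma minimal_TD_from_bp:
  assumes "D \<subseteq> V" "nbhd_set E D = V" "bp (nbhd E) D Z"
  shows "minimal_TD_set V E D"
  unfolding minimal_TD_set_def
proof (intro conjI allI impI)
  show "TD_set V E D" using assms unfolding TD_set_def by blast
  fix D' assume D': "D' \<subset> D"
  then obtain x where x: "x \<in> D" "x \<notin> D'" by blast
  then obtain r where r: "r \<in> nbhd E x" "r \<notin> \<Union>(nbhd E ` (D - {x}))" using assms(3) unfolding bp_def by blast
  have "r \<notin> nbhd_set E D'" using r D' x unfolding nbhd_set_alt by blast
  moreover have "r \<in> nbhd_set E D" using r x unfolding nbhd_set_alt by blast
  ultimately show "\<not> TD_set V E D'" using assms(2) unfolding TD_set_def by blast
qed

definition reachC :: "'a set set \<Rightarrow> 'a \<Rightarrow> 'a \<Rightarrow> 'a set" where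
  "reachC E s u = {v. (\<lambda>x y. adj E x y \<and> x \<noteq> s \<and> y \<noteq> s)\<^sup>*\<^sup>* u v}"

lemma C_sub:
  assumes "graph V E" "u \<in> V" "u \<noteq> s"
  shows "reachC E s u \<subseteq> V - {s}"
proof
  fix v assume "v \<in> reachC E s u"
  then have "(\<lambda>x y. adj E x y \<and> x \<noteq> s \<and> y \<noteq> s)\<^sup>*\<^sup>* u v" unfolding reachC_def by simp
  then show "v \<in> V - {s}"
    by (induction rule: rtranclp_induct) (use assms adj_V[OF assms(1)] in auto)
qed

lemma C_closed:
  assumes "v \<in> reachC E s u" "adj E v x \<or> adj E x v" "x \<noteq> s" "v \<noteq> s"
  shows "x \<in> reachC E s u"
proof -
  have "adj E v x" using assms(2) adj_sym by metis
  then show ?thesis using assms unfolding reachC_def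
    by (simp add: rtranclp.rtrancl_into_rtrancl)
qed

lemma C_F3:
  assumes "tree V E" "adj E s u" "b \<in> reachC E s u" "adj E s b"
  shows "b = u"
  using no_two_paths[OF assms(1,2,4)] assms(3) unfolding reachC_def by blast

lemma C_disj:
  assumes "tree V E" "adj E s u1" "adj E s u2" "u1 \<noteq> u2"
  shows "reachC E s u1 \<inter> reachC E s u2 = {}"
proof (rule ccontr)
  let ?A = "\<lambda>x y. adj E x y \<and> x \<noteq> s \<and> y \<noteq> s"
  assume "\<not> ?thesis"
  then obtain v where v: "?A\<^sup>*\<^sup>* u1 v" "?A\<^sup>*\<^sup>* u2 v" unfolding reachC_def by blast
  have c: "?A\<inverse>\<inverse> = ?A" by (auto simp: fun_eq_iff adj_sym)
  have "?A\<^sup>*\<^sup>* v u2" using rtranclp_converseI[OF v(2)] c by simp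
  then have "?A\<^sup>*\<^sup>* u1 u2" using v(1) by simp
  then show False using no_two_paths[OF assms] by blast
qed


lemma bp_mono: "bp f X Z \<Longrightarrow> Z \<subseteq> Z' \<Longrightarrow> bp f X Z'"
  unfolding bp_def by blast

lemma color_cases: "(c \<noteq> Red) = (c = Blue)"
  by (cases c) auto

lemma col:
  assumes "graph V E" "proper_2_coloring V E \<chi>" "adj E x y"
  shows "\<chi> x \<noteq> \<chi> y"
  using assms adj_V[OF assms(1,3)] unfolding proper_2_coloring_def by blast

lemma other_nb:
  assumes g: "graph V E" and v: "v \<in> V" and nl: "\<not> leaf V E v" and x: "adj E v x"
  shows "\<exists>w. adj E v w \<and> w \<noteq> c"
proof (rule ccontr)
  assume "\<not> ?thesis"
  then have "nbhd E v \<subseteq> {c}" unfolding nbhd_def using adj_sym[of E _ v] by blast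
  moreover have "x \<in> nbhd E v" unfolding nbhd_def using x adj_sym[of E v x] by simp
  ultimately have "nbhd E v = {c}" by blast
  then show False using nl v unfolding leaf_def by simp
qed

lemma in_nbhd: "(r \<in> nbhd E x) = adj E r x"
  unfolding nbhd_def by simp

lemma side:
  assumes tree: "tree V E" and pc: "proper_2_coloring V E \<chi>"
    and lb: "\<forall>v. leaf V E v \<longrightarrow> \<chi> v = Blue"
    and sV: "s \<in> V" and sR: "\<chi> s = Red" and us: "adj E s u" and nl: "\<not> leaf V E u"
    and nb: "\<forall>v\<in>V. \<exists>y. adj E v y"
  shows "\<exists>P Q. P \<subseteq> reachC E s u \<and> Q \<subseteq> reachC E s u \<and> u \<in> Q \<and>
     (\<forall>b\<in>P\<union>Q. \<chi> b = Blue) \<and>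
     nbhd_set E P = {v\<in>reachC E s u. \<chi> v = Red} \<and>
     nbhd_set E Q = insert s {v\<in>reachC E s u. \<chi> v = Red} \<and>
     bp (nbhd E) P {v\<in>reachC E s u. \<chi> v = Red} \<and> bp (nbhd E) Q {v\<in>reachC E s u. \<chi> v = Red}"
proof -
  define C where "C = reachC E s u"
  define R where "R = {v\<in>C. \<chi> v = Red}"
  have g: "graph V E" using tree unfolding tree_def by blast
  have fin: "finite V" using g unfolding graph_def by blast
  have uV: "u \<in> V" and us': "u \<noteq> s" using us adj_V[OF g] adj_irrefl[OF g] by metis+
  have CV: "C \<subseteq> V - {s}" unfolding C_def by (rule C_sub[OF g uV us'])
  have uC: "u \<in> C" unfolding C_def reachC_def by simp
  have uB: "\<chi> u = Blue" using col[OF g pc us] sR color_cases by metis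
  have redo: "\<exists>w. adj E r w \<and> w \<noteq> c" if rV: "r \<in> V" and rR: "\<chi> r = Red" for r c
  proof -
    have nl: "\<not> leaf V E r"
    proof
      assume "leaf V E r"
      then have "\<chi> r = Blue" using lb by blast
      then show False using rR by simp
    qed
    obtain y where "adj E r y" using nb rV by blast
    then show ?thesis using other_nb[OF g rV nl] by blast
  qed
  have nbB: "nbhd E b \<subseteq> R" if "b \<in> C" "\<chi> b = Blue" "b \<noteq> u" for b
  proof
    fix y assume "y \<in> nbhd E b"
    then have y: "adj E y b" by (simp add: in_nbhd)
    have yR: "\<chi> y = Red" using col[OF g pc y] that(2) color_cases by metis
    have "y \<noteq> s" using C_F3[OF tree us, of b] that y unfolding C_def by blast
    moreover have "b \<noteq> s" using that CV by blast
    ultimately have "y \<in> C" using C_closed[of b E s u y] that y unfolding C_def by blast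
    then show "y \<in> R" using yR unfolding R_def by blast
  qed
  have nbu: "nbhd E u \<subseteq> insert s R"
  proof
    fix y assume "y \<in> nbhd E u"
    then have y: "adj E y u" by (simp add: in_nbhd)
    have yR: "\<chi> y = Red" using col[OF g pc y] uB color_cases by metis
    have "y = s \<or> y \<in> C" using C_closed[of u E s u y] uC us' y unfolding C_def by blast
    then show "y \<in> insert s R" using yR unfolding R_def by blast
  qed
  have su: "s \<in> nbhd E u" using us by (simp add: in_nbhd)
  obtain w where uw: "adj E u w" and ws: "w \<noteq> s"
    using other_nb[OF g uV nl, of s] us adj_sym[of E s u] by blast
  have wR: "w \<in> R" using nbu uw ws adj_sym[of E u w] by (auto simp: in_nbhd)
  have wred: "\<chi> w = Red" using wR unfolding R_def by blast
  define B1 where "B1 = {b\<in>C. \<chi> b = Blue \<and> b \<noteq> u}"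
  have finB1: "finite B1" proof -
    have "B1 \<subseteq> V" using CV unfolding B1_def by blast
    then show ?thesis using fin finite_subset by blast
  qed
  have nbrC: "a \<in> C \<and> \<chi> a = Blue" if "r \<in> R" "adj E r a" for r a
  proof -
    have rV: "r \<noteq> s" "\<chi> r = Red" using that CV unfolding R_def by auto
    have aB: "\<chi> a = Blue" using col[OF g pc that(2)] rV color_cases by metis
    then have "a \<noteq> s" using sR by auto
    then have "a \<in> C" using C_closed[of r E s u a] that rV unfolding C_def R_def by blast
    then show ?thesis using aB by blast
  qed
  have cov1: "R \<subseteq> \<Union>(nbhd E ` B1)"
  proof
    fix r assume r: "r \<in> R"
    then have "r \<in> V" "\<chi> r = Red" using CV unfolding R_def by auto
    then obtain a where a: "adj E r a" "a \<noteq> u" using redo by blast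
    then have "a \<in> B1" using nbrC[OF r a(1)] unfolding B1_def by blast
    then show "r \<in> \<Union>(nbhd E ` B1)" using a by (auto simp: in_nbhd)
  qed
  obtain P where P: "P \<subseteq> B1" "R \<subseteq> \<Union>(nbhd E ` P)" "bp (nbhd E) P R"
    using min_cover[OF finB1 cov1] by blast
  have NP: "nbhd_set E P = R"
    using P(1,2) nbB unfolding nbhd_set_alt B1_def by blast
  define B2 where "B2 = {b\<in>B1. \<not> adj E w b}"
  define Z2 where "Z2 = R - nbhd E u"
  have finB2: "finite B2" using finB1 unfolding B2_def by simp
  have cov2: "Z2 \<subseteq> \<Union>(nbhd E ` B2)"
  proof
    fix r assume r: "r \<in> Z2"
    then have rR: "r \<in> R" and ru: "\<not> adj E r u" unfolding Z2_def by (auto simp: in_nbhd)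
    then have rV: "r \<in> V" "\<chi> r = Red" using CV unfolding R_def by auto
    then obtain a where a: "adj E r a" using redo by blast
    have a1: "a \<in> B1" using nbrC[OF rR a] a ru unfolding B1_def by blast
    show "r \<in> \<Union>(nbhd E ` B2)"
    proof (cases "adj E w a")
      case False
      then show ?thesis using a a1 unfolding B2_def by (auto simp: in_nbhd)
    next
      case True
      obtain b where b: "adj E r b" "b \<noteq> a" using redo rV by blast
      have b1: "b \<in> B1" using nbrC[OF rR b(1)] b ru unfolding B1_def by blast
      have "\<not> adj E w b"
      proof
        assume wb: "adj E w b"
        have aw: "a \<noteq> w" "b \<noteq> w" using a1 b1 wred unfolding B1_def by auto
        have rw: "r \<noteq> w" using ru uw adj_sym[of E u w] by blast
        let ?A = "\<lambda>x y. adj E x y \<and> x \<noteq> w \<and> y \<noteq> w"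
        have h1: "?A a r" and h2: "?A r b" using a b aw rw adj_sym[of E r a] by auto
        have "?A\<^sup>*\<^sup>* a b" using converse_rtranclp_into_rtranclp[of ?A, OF h1 r_into_rtranclp[of ?A, OF h2]] .
        then show False using no_two_paths[OF tree True wb b(2)[symmetric]] by blast
      qed
      then show ?thesis using b b1 unfolding B2_def by (auto simp: in_nbhd)
    qed
  qed
  obtain Q' where Q': "Q' \<subseteq> B2" "Z2 \<subseteq> \<Union>(nbhd E ` Q')" "bp (nbhd E) Q' Z2"
    using min_cover[OF finB2 cov2] by blast
  have NQ': "\<Union>(nbhd E ` Q') \<subseteq> R" using Q'(1) nbB unfolding B2_def B1_def by blast
  define Q where "Q = {u} \<union> Q'"
  have NQ0: "nbhd_set E Q = nbhd E u \<union> \<Union>(nbhd E ` Q')" unfolding nbhd_set_alt Q_def by simp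
  have NQ1: "nbhd E u \<union> \<Union>(nbhd E ` Q') \<subseteq> insert s R" using nbu NQ' by blast
  have NQ2: "insert s R \<subseteq> nbhd E u \<union> \<Union>(nbhd E ` Q')" using su Q'(2) unfolding Z2_def by blast
  have NQ: "nbhd_set E Q = insert s R" unfolding NQ0 using NQ1 NQ2 by (rule equalityI)
  have "bp (nbhd E) ({u} \<union> Q') ({w} \<union> Z2)"
  proof (rule bp_union)
    show "bp (nbhd E) {u} {w}" by (rule bp_single) (use uw adj_sym[of E u w] in \<open>simp add: in_nbhd\<close>)
    show "bp (nbhd E) Q' Z2" by (rule Q'(3))
    show "\<Union>(nbhd E ` Q') \<inter> {w} = {}" using Q'(1) unfolding B2_def by (auto simp: in_nbhd)
    show "\<Union>(nbhd E ` {u}) \<inter> Z2 = {}" unfolding Z2_def by auto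
  qed
  then have bQ: "bp (nbhd E) Q R" unfolding Q_def by (rule bp_mono) (use wR in \<open>auto simp: Z2_def\<close>)
  have h: "P \<subseteq> C" "Q \<subseteq> C" "u \<in> Q" "\<forall>b\<in>P\<union>Q. \<chi> b = Blue"
    using P(1) Q'(1) uC uB unfolding B1_def B2_def Q_def by auto
  show ?thesis unfolding C_def[symmetric] R_def[symmetric]
    by (intro exI[of _ P] exI[of _ Q] conjI h NP NQ P(3) bQ)
qed


lemma red_other:
  assumes g: "graph V E" and lb: "\<forall>v. leaf V E v \<longrightarrow> \<chi> v = Blue"
    and nb: "\<forall>v\<in>V. \<exists>y. adj E v y" and rV: "r \<in> V" and rR: "\<chi> r = Red"
  shows "\<exists>w. adj E r w \<and> w \<noteq> c"
proof -
  have nl: "\<not> leaf V E r"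
  proof
    assume "leaf V E r"
    then have "\<chi> r = Blue" using lb by blast
    then show False using rR by simp
  qed
  obtain y where "adj E r y" using nb rV by blast
  then show ?thesis using other_nb[OF g rV nl] by blast
qed

lemma leaf_height: "leaf V E v \<Longrightarrow> height V E v = 0"
  unfolding height_def by (rule Least_eq_0) auto

definition good :: "'a set \<Rightarrow> 'a set set \<Rightarrow> ('a \<Rightarrow> color) \<Rightarrow> 'a set \<Rightarrow> bool" where
  "good V E \<chi> D \<longleftrightarrow> D \<subseteq> V \<and> (\<forall>b\<in>D. \<chi> b = Blue) \<and> nbhd_set E D = {v\<in>V. \<chi> v = Red}
     \<and> bp (nbhd E) D {v\<in>V. \<chi> v = Red}"


lemma nbhd_set_Un: "nbhd_set E (A \<union> B) = nbhd_set E A \<union> nbhd_set E B"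
  unfolding nbhd_set_def by blast

lemma nbhd_set_single: "nbhd_set E {x} = nbhd E x"
  unfolding nbhd_set_def by simp

lemma bp_union':
  assumes "bp (nbhd E) X Z" "bp (nbhd E) Y W" "nbhd_set E Y \<inter> Z = {}" "nbhd_set E X \<inter> W = {}"
  shows "bp (nbhd E) (X \<union> Y) (Z \<union> W)"
  using bp_union[of "nbhd E" X Z Y W] assms unfolding nbhd_set_alt by blast

lemma core:
  assumes tree: "tree V E" and pc: "proper_2_coloring V E \<chi>"
    and lb: "\<forall>v. leaf V E v \<longrightarrow> \<chi> v = Blue"
    and sup: "support_vertex V E s"
    and two: "card (nbhd E s \<inter> level V E 2) \<ge> 2"
  shows "\<exists>D1 D2. good V E \<chi> D1 \<and> good V E \<chi> D2 \<and> card D1 \<noteq> card D2"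
proof -
  have g: "graph V E" using tree unfolding tree_def by blast
  have fin: "finite V" using g unfolding graph_def by blast
  have conn: "connected V E" using tree unfolding tree_def by blast
  obtain l where lf: "leaf V E l" and sl: "adj E s l" and sV: "s \<in> V"
    using sup unfolding support_vertex_def by blast
  have lV: "l \<in> V" using lf unfolding leaf_def by blast
  have lB: "\<chi> l = Blue" using lb lf by blast
  have sR: "\<chi> s = Red"
  proof (cases "\<chi> s")
    case Blue
    then show ?thesis using col[OF g pc sl] lB by simp
  qed simp
  have sl': "s \<noteq> l" using sl adj_irrefl[OF g] by metis
  have nb: "\<forall>v\<in>V. \<exists>y. adj E v y"
  proof
    fix v assume vV: "v \<in> V"
    show "\<exists>y. adj E v y"
    proof (cases "v = s")
      case True
      then show ?thesis using sl by blast
    next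
      case False
      have "(adj E)\<^sup>*\<^sup>* v s" using conn vV sV unfolding connected_def by blast
      then show ?thesis using False by (cases rule: converse_rtranclpE) blast+
    qed
  qed
  have NL: "nbhd E l = {s}"
  proof -
    have "card (nbhd E l) = 1" using lf unfolding leaf_def by blast
    then obtain x where x: "nbhd E l = {x}" using card_1_singletonE by blast
    have "s \<in> nbhd E l" using sl by (simp add: in_nbhd)
    then show ?thesis using x by auto
  qed
  have nbV: "nbhd E v \<subseteq> V" for v using adj_V[OF g] unfolding nbhd_def by blast
  define S where "S = nbhd E s \<inter> level V E 2"
  have finS: "finite S" unfolding S_def using nbV fin finite_subset by blast
  obtain u1 where u1S: "u1 \<in> S" using two unfolding S_def[symmetric]
    by (metis all_not_in_conv card.empty not_numeral_le_zero)
  have "card (S - {u1}) \<ge> 1" using two u1S finS unfolding S_def[symmetric] by simp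
  then obtain u2 where u2S: "u2 \<in> S - {u1}"
    by (metis all_not_in_conv card.empty not_one_le_zero)
  have u12: "u1 \<noteq> u2" using u2S by blast
  have su1: "adj E s u1" and su2: "adj E s u2" using u1S u2S adj_sym[of E s] unfolding S_def
    by (auto simp: in_nbhd)
  have nl1: "\<not> leaf V E u1" and nl2: "\<not> leaf V E u2"
    using u1S u2S leaf_height unfolding S_def level_def by fastforce+
  have u1s: "u1 \<noteq> s" and u2s: "u2 \<noteq> s" using su1 su2 adj_irrefl[OF g] by metis+
  have u1V: "u1 \<in> V" and u2V: "u2 \<in> V" using su1 su2 adj_V[OF g] by blast+
  obtain P1 Q1 where PQ1: "P1 \<subseteq> reachC E s u1" "Q1 \<subseteq> reachC E s u1" "u1 \<in> Q1"
     "\<forall>b\<in>P1\<union>Q1. \<chi> b = Blue"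
     "nbhd_set E P1 = {v\<in>reachC E s u1. \<chi> v = Red}"
     "nbhd_set E Q1 = insert s {v\<in>reachC E s u1. \<chi> v = Red}"
     "bp (nbhd E) P1 {v\<in>reachC E s u1. \<chi> v = Red}" "bp (nbhd E) Q1 {v\<in>reachC E s u1. \<chi> v = Red}"
    using side[OF tree pc lb sV sR su1 nl1 nb] by blast
  obtain P2 Q2 where PQ2: "P2 \<subseteq> reachC E s u2" "Q2 \<subseteq> reachC E s u2" "u2 \<in> Q2"
     "\<forall>b\<in>P2\<union>Q2. \<chi> b = Blue"
     "nbhd_set E P2 = {v\<in>reachC E s u2. \<chi> v = Red}"
     "nbhd_set E Q2 = insert s {v\<in>reachC E s u2. \<chi> v = Red}"
     "bp (nbhd E) P2 {v\<in>reachC E s u2. \<chi> v = Red}" "bp (nbhd E) Q2 {v\<in>reachC E s u2. \<chi> v = Red}"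
    using side[OF tree pc lb sV sR su2 nl2 nb] by blast
  define C1 where "C1 = reachC E s u1"
  define C2 where "C2 = reachC E s u2"
  define C0 where "C0 = V - {s} - C1 - C2"
  define R0 where "R0 = {v\<in>C0. \<chi> v = Red}"
  define R1 where "R1 = {v\<in>C1. \<chi> v = Red}"
  define R2 where "R2 = {v\<in>C2. \<chi> v = Red}"
  define Rd where "Rd = {v\<in>V. \<chi> v = Red}"
  note PQ1 = PQ1[folded C1_def, folded R1_def] and PQ2 = PQ2[folded C2_def, folded R2_def]
  have CV1: "C1 \<subseteq> V - {s}" unfolding C1_def by (rule C_sub[OF g u1V u1s])
  have CV2: "C2 \<subseteq> V - {s}" unfolding C2_def by (rule C_sub[OF g u2V u2s])
  have C12: "C1 \<inter> C2 = {}" unfolding C1_def C2_def by (rule C_disj[OF tree su1 su2 u12])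
  have Rd_split: "Rd = insert s (R0 \<union> (R1 \<union> R2))"
    using CV1 CV2 sR sV unfolding Rd_def R0_def R1_def R2_def C0_def by blast
  have dis: "s \<notin> R0" "s \<notin> R1" "s \<notin> R2" "R0 \<inter> R1 = {}" "R0 \<inter> R2 = {}" "R1 \<inter> R2 = {}"
    using CV1 CV2 C12 unfolding R0_def R1_def R2_def C0_def by blast+
  have closed0: "a \<in> C0" if "b \<in> C0" "adj E a b \<or> adj E b a" "a \<noteq> s" for a b
  proof -
    have aV: "a \<in> V" using that(2) adj_V[OF g] by blast
    have bs: "b \<noteq> s" using that(1) unfolding C0_def by blast
    have "a \<notin> C1"
    proof
      assume "a \<in> C1"
      then have "b \<in> C1" using C_closed[of a E s u1 b] that(2,3) bs unfolding C1_def by blast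
      then show False using that(1) unfolding C0_def by blast
    qed
    moreover have "a \<notin> C2"
    proof
      assume "a \<in> C2"
      then have "b \<in> C2" using C_closed[of a E s u2 b] that(2,3) bs unfolding C2_def by blast
      then show False using that(1) unfolding C0_def by blast
    qed
    ultimately show ?thesis using aV that(3) unfolding C0_def by blast
  qed
  define B0 where "B0 = {b\<in>C0. \<chi> b = Blue \<and> \<not> adj E s b}"
  have finB0: "finite B0"
  proof -
    have "B0 \<subseteq> V" unfolding B0_def C0_def by blast
    then show ?thesis using fin finite_subset by blast
  qed
  have nbr0: "a \<in> C0 \<and> \<chi> a = Blue" if "r \<in> R0" "adj E r a" for r a
  proof -
    have rR: "\<chi> r = Red" "r \<in> C0" using that(1) unfolding R0_def by auto
    have aB: "\<chi> a = Blue" using col[OF g pc that(2)] rR color_cases by metis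
    then have "a \<noteq> s" using sR by auto
    then show ?thesis using closed0[OF rR(2), of a] that(2) aB by blast
  qed
  have cov0: "R0 \<subseteq> \<Union>(nbhd E ` B0)"
  proof
    fix r assume r: "r \<in> R0"
    then have rV: "r \<in> V" "\<chi> r = Red" "r \<noteq> s" unfolding R0_def C0_def by auto
    obtain a where a: "adj E r a" using red_other[OF g lb nb rV(1,2)] by blast
    have a0: "a \<in> C0 \<and> \<chi> a = Blue" using nbr0[OF r a] .
    show "r \<in> \<Union>(nbhd E ` B0)"
    proof (cases "adj E s a")
      case False
      then show ?thesis using a a0 unfolding B0_def by (auto simp: in_nbhd)
    next
      case True
      obtain b where b: "adj E r b" "b \<noteq> a" using red_other[OF g lb nb rV(1,2)] by blast
      have b0: "b \<in> C0 \<and> \<chi> b = Blue" using nbr0[OF r b(1)] .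
      have "\<not> adj E s b"
      proof
        assume sb: "adj E s b"
        have aw: "a \<noteq> s" "b \<noteq> s" using a0 b0 sR by auto
        let ?A = "\<lambda>x y. adj E x y \<and> x \<noteq> s \<and> y \<noteq> s"
        have h1: "?A a r" and h2: "?A r b" using a b aw rV(3) adj_sym[of E r a] by auto
        have "?A\<^sup>*\<^sup>* a b" using converse_rtranclp_into_rtranclp[of ?A, OF h1 r_into_rtranclp[of ?A, OF h2]] .
        then show False using no_two_paths[OF tree True sb b(2)[symmetric]] by blast
      qed
      then show ?thesis using b b0 unfolding B0_def by (auto simp: in_nbhd)
    qed
  qed
  obtain P0 where P0: "P0 \<subseteq> B0" "R0 \<subseteq> \<Union>(nbhd E ` P0)" "bp (nbhd E) P0 R0"
    using min_cover[OF finB0 cov0] by blast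
  have nbB0: "nbhd E b \<subseteq> R0" if "b \<in> B0" for b
  proof
    fix y assume "y \<in> nbhd E b"
    then have y: "adj E y b" by (simp add: in_nbhd)
    have bB: "\<chi> b = Blue" "b \<in> C0" "\<not> adj E s b" using that unfolding B0_def by auto
    have yR: "\<chi> y = Red" using col[OF g pc y] bB(1) color_cases by metis
    have "y \<noteq> s" using y bB(3) by blast
    then have "y \<in> C0" using closed0[OF bB(2), of y] y by blast
    then show "y \<in> R0" using yR unfolding R0_def by blast
  qed
  have NP0: "nbhd_set E P0 = R0"
  proof
    show "nbhd_set E P0 \<subseteq> R0" unfolding nbhd_set_alt using P0(1) nbB0 by blast
    show "R0 \<subseteq> nbhd_set E P0" unfolding nbhd_set_alt using P0(2) .
  qed
  have lC1: "l \<notin> C1"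
  proof
    assume "l \<in> C1"
    then have "l = u1" using C_F3[OF tree su1, of l] sl unfolding C1_def by blast
    then show False using nl1 lf by simp
  qed
  have lC2: "l \<notin> C2"
  proof
    assume "l \<in> C2"
    then have "l = u2" using C_F3[OF tree su2, of l] sl unfolding C2_def by blast
    then show False using nl2 lf by simp
  qed
  have P0C: "P0 \<subseteq> C0" and P0B: "\<forall>b\<in>P0. \<chi> b = Blue" and lP0: "l \<notin> P0"
    using P0(1) sl unfolding B0_def by auto
  have C0V: "C0 \<subseteq> V" unfolding C0_def by blast
  have C01: "C0 \<inter> C1 = {}" and C02: "C0 \<inter> C2 = {}" unfolding C0_def by blast+
  have finsub: "finite X" if "X \<subseteq> V" for X using fin finite_subset that by blast
  have fP0: "finite P0" by (rule finsub) (use P0C C0V in blast)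
  have fP1: "finite P1" by (rule finsub) (use PQ1(1) CV1 in blast)
  have fP2: "finite P2" by (rule finsub) (use PQ2(1) CV2 in blast)
  have fQ1: "finite Q1" by (rule finsub) (use PQ1(2) CV1 in blast)
  have fQ2: "finite Q2" by (rule finsub) (use PQ2(2) CV2 in blast)
  have NL': "nbhd_set E {l} = {s}" using NL by (simp add: nbhd_set_single)
  have bl: "bp (nbhd E) {l} {s}" by (rule bp_single) (simp add: NL)
  have RdV: "R0 \<union> R1 \<union> R2 \<subseteq> Rd" unfolding Rd_split by blast
  define Da where "Da = {l} \<union> (P0 \<union> (P1 \<union> P2))"
  define Db where "Db = Q1 \<union> (Q2 \<union> P0)"
  define Dc where "Dc = Q1 \<union> (P2 \<union> P0)"
  define Dd where "Dd = Q2 \<union> (P1 \<union> P0)"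
  have gDa: "good V E \<chi> Da"
    unfolding good_def
  proof (intro conjI)
    show "Da \<subseteq> V" unfolding Da_def using lV P0C C0V PQ1(1) PQ2(1) CV1 CV2 by blast
    show "\<forall>b\<in>Da. \<chi> b = Blue" unfolding Da_def using lB P0B PQ1(4) PQ2(4) by blast
    show N: "nbhd_set E Da = {v \<in> V. \<chi> v = Red}"
      unfolding Da_def Rd_def[symmetric] Rd_split nbhd_set_Un NL' NP0 PQ1(5) PQ2(5) by blast
    have b12: "bp (nbhd E) (P1 \<union> P2) (R1 \<union> R2)"
      by (rule bp_union'[OF PQ1(7) PQ2(7)]) (use dis in \<open>simp_all add: PQ1(5) PQ2(5) Int_commute\<close>)
    have b012: "bp (nbhd E) (P0 \<union> (P1 \<union> P2)) (R0 \<union> (R1 \<union> R2))"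
      by (rule bp_union'[OF P0(3) b12]) (use dis in \<open>auto simp: PQ1(5) PQ2(5) NP0 nbhd_set_Un\<close>)
    have "bp (nbhd E) Da ({s} \<union> (R0 \<union> (R1 \<union> R2)))"
      unfolding Da_def
      by (rule bp_union'[OF bl b012]) (use dis in \<open>auto simp: PQ1(5) PQ2(5) NP0 nbhd_set_Un NL'\<close>)
    then show "bp (nbhd E) Da {v \<in> V. \<chi> v = Red}"
      by (rule bp_mono) (simp add: Rd_def[symmetric] Rd_split)
  qed
  have gDb: "good V E \<chi> Db"
    unfolding good_def
  proof (intro conjI)
    show "Db \<subseteq> V" unfolding Db_def using P0C C0V PQ1(2) PQ2(2) CV1 CV2 by blast
    show "\<forall>b\<in>Db. \<chi> b = Blue" unfolding Db_def using P0B PQ1(4) PQ2(4) by blast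
    show N: "nbhd_set E Db = {v \<in> V. \<chi> v = Red}"
      unfolding Db_def Rd_def[symmetric] Rd_split nbhd_set_Un NP0 PQ1(6) PQ2(6) by blast
    have b2: "bp (nbhd E) (Q2 \<union> P0) (R2 \<union> R0)"
      by (rule bp_union'[OF PQ2(8) P0(3)]) (use dis in \<open>auto simp: PQ2(6) NP0\<close>)
    have "bp (nbhd E) Db (R1 \<union> (R2 \<union> R0))"
      unfolding Db_def
      by (rule bp_union'[OF PQ1(8) b2]) (use dis in \<open>auto simp: PQ1(6) PQ2(6) NP0 nbhd_set_Un\<close>)
    then show "bp (nbhd E) Db {v \<in> V. \<chi> v = Red}"
      by (rule bp_mono) (simp add: Rd_def[symmetric] Rd_split, blast)
  qed
  have gDc: "good V E \<chi> Dc"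
    unfolding good_def
  proof (intro conjI)
    show "Dc \<subseteq> V" unfolding Dc_def using P0C C0V PQ1(2) PQ2(1) CV1 CV2 by blast
    show "\<forall>b\<in>Dc. \<chi> b = Blue" unfolding Dc_def using P0B PQ1(4) PQ2(4) by blast
    show N: "nbhd_set E Dc = {v \<in> V. \<chi> v = Red}"
      unfolding Dc_def Rd_def[symmetric] Rd_split nbhd_set_Un NP0 PQ1(6) PQ2(5) by blast
    have b2: "bp (nbhd E) (P2 \<union> P0) (R2 \<union> R0)"
      by (rule bp_union'[OF PQ2(7) P0(3)]) (use dis in \<open>auto simp: PQ2(5) NP0\<close>)
    have "bp (nbhd E) Dc (R1 \<union> (R2 \<union> R0))"
      unfolding Dc_def
      by (rule bp_union'[OF PQ1(8) b2]) (use dis in \<open>auto simp: PQ1(6) PQ2(5) NP0 nbhd_set_Un\<close>)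
    then show "bp (nbhd E) Dc {v \<in> V. \<chi> v = Red}"
      by (rule bp_mono) (simp add: Rd_def[symmetric] Rd_split, blast)
  qed
  have gDd: "good V E \<chi> Dd"
    unfolding good_def
  proof (intro conjI)
    show "Dd \<subseteq> V" unfolding Dd_def using P0C C0V PQ1(1) PQ2(2) CV1 CV2 by blast
    show "\<forall>b\<in>Dd. \<chi> b = Blue" unfolding Dd_def using P0B PQ1(4) PQ2(4) by blast
    show N: "nbhd_set E Dd = {v \<in> V. \<chi> v = Red}"
      unfolding Dd_def Rd_def[symmetric] Rd_split nbhd_set_Un NP0 PQ1(5) PQ2(6) by blast
    have b2: "bp (nbhd E) (P1 \<union> P0) (R1 \<union> R0)"
      by (rule bp_union'[OF PQ1(7) P0(3)]) (use dis in \<open>auto simp: PQ1(5) NP0\<close>)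
    have "bp (nbhd E) Dd (R2 \<union> (R1 \<union> R0))"
      unfolding Dd_def
      by (rule bp_union'[OF PQ2(8) b2]) (use dis in \<open>auto simp: PQ2(6) PQ1(5) NP0 nbhd_set_Un\<close>)
    then show "bp (nbhd E) Dd {v \<in> V. \<chi> v = Red}"
      by (rule bp_mono) (simp add: Rd_def[symmetric] Rd_split, blast)
  qed
  have d01: "P0 \<inter> (P1 \<union> P2) = {}" using P0C PQ1(1) PQ2(1) C01 C02 by blast
  have d12: "P1 \<inter> P2 = {}" using PQ1(1) PQ2(1) C12 by blast
  have cDa: "card Da = Suc (card P0 + (card P1 + card P2))"
  proof -
    have "l \<notin> P0 \<union> (P1 \<union> P2)" using lP0 lC1 lC2 PQ1(1) PQ2(1) by blast
    then show ?thesis unfolding Da_def using fP0 fP1 fP2 d01 d12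
      by (simp add: card_Un_disjoint)
  qed
  have cDb: "card Db = card Q1 + (card Q2 + card P0)"
  proof -
    have "Q1 \<inter> (Q2 \<union> P0) = {}" "Q2 \<inter> P0 = {}" using P0C PQ1(2) PQ2(2) C01 C02 C12 by blast+
    then show ?thesis unfolding Db_def using fP0 fQ1 fQ2 by (simp add: card_Un_disjoint)
  qed
  have cDc: "card Dc = card Q1 + (card P2 + card P0)"
  proof -
    have "Q1 \<inter> (P2 \<union> P0) = {}" "P2 \<inter> P0 = {}" using P0C PQ1(2) PQ2(1) C01 C02 C12 by blast+
    then show ?thesis unfolding Dc_def using fP0 fQ1 fP2 by (simp add: card_Un_disjoint)
  qed
  have cDd: "card Dd = card Q2 + (card P1 + card P0)"
  proof -
    have "Q2 \<inter> (P1 \<union> P0) = {}" "P1 \<inter> P0 = {}" using P0C PQ1(1) PQ2(2) C01 C02 C12 by blast+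
    then show ?thesis unfolding Dd_def using fP0 fQ2 fP1 by (simp add: card_Un_disjoint)
  qed
  show ?thesis
  proof (cases "card Da = card Dc")
    case False
    then show ?thesis using gDa gDc by blast
  next
    case True
    then have "card Dd \<noteq> card Db" using cDa cDb cDc cDd by simp
    then show ?thesis using gDd gDb by blast
  qed
qed


theorem theorem3p35:
  fixes V :: "'a set" and E :: "'a set set" and \<chi> :: "'a \<Rightarrow> color" and s :: 'a
  assumes "tree V E"
    and "balanced V E"
    and "proper_2_coloring V E \<chi>"
    and "\<forall>v. leaf V E v \<longrightarrow> \<chi> v = Blue"
    and "support_vertex V E s" and "s \<in> level V E 1"
    and "card (nbhd E s \<inter> level V E 2) \<ge> 2"
  shows "(\<exists>D1 D2. minimal_RD_set V E \<chi> D1 \<and> minimal_RD_set V E \<chi> D2 \<and> card D1 \<noteq> card D2)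
         \<and> mixed V E"
proof -
  note tree = assms(1) and pc = assms(3)
  obtain D1 D2 where gD: "good V E \<chi> D1" "good V E \<chi> D2" and cD: "card D1 \<noteq> card D2"
    using core[OF assms(1,3,4,5,7)] by blast
  have mr: "minimal_RD_set V E \<chi> D" if "good V E \<chi> D" for D
    using that minimal_RD_from_bp[of D V E \<chi>] unfolding good_def by blast
  have g: "graph V E" using tree unfolding tree_def by blast
  have fin: "finite V" using g unfolding graph_def by blast
  have conn: "connected V E" using tree unfolding tree_def by blast
  obtain l where sl: "adj E s l" and sV: "s \<in> V"
    using assms(5) unfolding support_vertex_def by blast
  have nb: "\<forall>v\<in>V. \<exists>y. adj E v y"
  proof
    fix v assume vV: "v \<in> V"
    show "\<exists>y. adj E v y"
    proof (cases "v = s")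
      case True
      then show ?thesis using sl by blast
    next
      case False
      have "(adj E)\<^sup>*\<^sup>* v s" using conn vV sV unfolding connected_def by blast
      then show ?thesis using False by (cases rule: converse_rtranclpE) blast+
    qed
  qed
  define Rd where "Rd = {v\<in>V. \<chi> v = Red}"
  define Bl where "Bl = {v\<in>V. \<chi> v = Blue}"
  have finRd: "finite Rd" unfolding Rd_def using fin by simp
  have covB: "Bl \<subseteq> \<Union>(nbhd E ` Rd)"
  proof
    fix v assume v: "v \<in> Bl"
    then have vV: "v \<in> V" and vB: "\<chi> v = Blue" unfolding Bl_def by auto
    obtain y where y: "adj E v y" using nb vV by blast
    have "\<chi> y = Red" using col[OF g pc y] vB color_cases by metis
    moreover have "y \<in> V" using y adj_V[OF g] by blast
    ultimately show "v \<in> \<Union>(nbhd E ` Rd)" using y unfolding Rd_def by (auto simp: in_nbhd)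
  qed
  obtain Z where Z: "Z \<subseteq> Rd" "Bl \<subseteq> \<Union>(nbhd E ` Z)" "bp (nbhd E) Z Bl"
    using min_cover[OF finRd covB] by blast
  have NZ: "nbhd_set E Z = Bl"
  proof
    show "Bl \<subseteq> nbhd_set E Z" unfolding nbhd_set_alt by (rule Z(2))
    show "nbhd_set E Z \<subseteq> Bl"
    proof
      fix y assume "y \<in> nbhd_set E Z"
      then obtain z where z: "z \<in> Z" "adj E y z" unfolding nbhd_set_alt by (auto simp: in_nbhd)
      have "\<chi> z = Red" using z(1) Z(1) unfolding Rd_def by blast
      then have "\<chi> y = Blue" using col[OF g pc z(2)] color_cases by metis
      moreover have "y \<in> V" using z(2) adj_V[OF g] by blast
      ultimately show "y \<in> Bl" unfolding Bl_def by blast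
    qed
  qed
  have finZ: "finite Z" using Z(1) finRd finite_subset by blast
  have td: "minimal_TD_set V E (D \<union> Z) \<and> card (D \<union> Z) = card D + card Z" if gd: "good V E \<chi> D" for D
  proof
    have D: "D \<subseteq> V" "\<forall>b\<in>D. \<chi> b = Blue" "nbhd_set E D = Rd" "bp (nbhd E) D Rd"
      using gd unfolding good_def Rd_def by blast+
    have disj: "D \<inter> Z = {}" using D(2) Z(1) unfolding Rd_def by fastforce
    have finD: "finite D" using D(1) fin finite_subset by blast
    show "card (D \<union> Z) = card D + card Z" using disj finD finZ by (simp add: card_Un_disjoint)
    have "bp (nbhd E) (D \<union> Z) (Rd \<union> Bl)"
    proof (rule bp_union'[OF D(4) Z(3)])
      show "nbhd_set E Z \<inter> Rd = {}" unfolding NZ Rd_def Bl_def by auto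
      show "nbhd_set E D \<inter> Bl = {}" unfolding D(3) Rd_def Bl_def by auto
    qed
    moreover have "D \<union> Z \<subseteq> V" using D(1) Z(1) unfolding Rd_def by blast
    moreover have "nbhd_set E (D \<union> Z) = V"
    proof -
      have "Rd \<union> Bl = V" unfolding Rd_def Bl_def using color_cases by blast
      then show ?thesis unfolding nbhd_set_Un D(3) NZ .
    qed
    ultimately show "minimal_TD_set V E (D \<union> Z)" using minimal_TD_from_bp by blast
  qed
  have "mixed V E"
    unfolding mixed_def
  proof (intro exI conjI)
    show "minimal_TD_set V E (D1 \<union> Z)" "minimal_TD_set V E (D2 \<union> Z)"
      using td[OF gD(1)] td[OF gD(2)] by blast+
    show "card (D1 \<union> Z) \<noteq> card (D2 \<union> Z)" using td[OF gD(1)] td[OF gD(2)] cD by simp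
  qed
  then show ?thesis using mr[OF gD(1)] mr[OF gD(2)] cD by blast
qed

end
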